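(* Let $R_s>0$, $\lambda=2^{R_s}$, and let $\gamma_d,\gamma_e$ be independent random variables where, for $t\in\{d,e\}$, $\gamma_t$ is Gamma distributed (Nakagami-$m$ fading) with shape $m_t>0$ and mean $\overline\gamma_t>0$, so that $F_{\gamma_t}(x)=\Upsilon(m_t,m_tx/\overline\gamma_t)/\Gamma(m_t)$. Let $\sigma_e^2$ be the variance of $\gamma_e$, let $P(x)=F_{\gamma_d}(\lambda-1+\lambda x)$, and define $\widetilde P_{\rm sop}:=P(\overline\gamma_e)+\frac{\sigma_e^2}{2}P''(\overline\gamma_e)$. Then $$\widetilde P_{\rm sop}=\frac{\Upsilon\!\left(m_d,\frac{m_d(\lambda-1+\lambda\overline\gamma_e)}{\overline\gamma_d}\right)}{\Gamma(m_d)}+\overline\gamma_e^2\lambda^2\,\frac{\left(\frac{m_e+1}{m_e}-1\right)G_{2,3}^{1,2}\!\left(\frac{m_d(\lambda-1+\lambda\overline\gamma_e)}{\overline\gamma_d}\,\middle|\,{0,\,1\atop m_d,\,0,\,2}\right)}{2\Gamma(m_d)(\lambda-1+\lambda\overline\gamma_e)^2}.$$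
   Context: $\Upsilon(\cdot,\cdot)$ is the lower incomplete Gamma function, $\Gamma$ the Gamma function, and $G^{m,n}_{p,q}\left(z\,\middle|\,{a_1,\dots,a_p\atop b_1,\dots,b_q}\right)$ the standard Meijer G-function. $\widetilde P_{\rm sop}$ is the second-order Taylor approximation of the secrecy outage probability $\mathbb{E}\{F_{\gamma_d}(\lambda-1+\lambda\gamma_e)\}$ around the mean of $\gamma_e$. *)

theory Defs
  imports "HOL-Probability.Probability"
begin

definition lower_inc_Gamma :: "real \<Rightarrow> real \<Rightarrow> real" where
  "lower_inc_Gamma s x = integral {0..x} (\<lambda>t. t powr (s - 1) * exp (- t))"

definition gamma_density :: "real \<Rightarrow> real \<Rightarrow> real \<Rightarrow> real" where
  "gamma_density m g x =
     (if x > 0 then (m / g) powr m * x powr (m - 1) * exp (- m * x / g) / Gamma m else 0)"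

definition gamma_cdf :: "real \<Rightarrow> real \<Rightarrow> real \<Rightarrow> real" where
  "gamma_cdf m g x = lower_inc_Gamma m (m * x / g) / Gamma m"

text \<open>Meijer G-function G^{1,n}_{p,q}(z | a_1..a_p ; b_1..b_q) (first upper index m = 1),
  p = length as, q = length bs, given by its standard residue-series representation
  (sum of residues of the Mellin-Barnes integrand at the poles of Gamma(b_1 - s)),
  i.e. DLMF 16.17.2 with m = 1, written with the regularized hypergeometric series
  (rGamma = 1/Gamma, which is 0 at the poles of Gamma).\<close>
definition meijerG_1 :: "nat \<Rightarrow> real list \<Rightarrow> real list \<Rightarrow> real \<Rightarrow> real" where
  "meijerG_1 n as bs z =
     (let p = length as; q = length bs; b1 = bs ! 0 in
      (\<Prod>l<n. Gamma (1 + b1 - as ! l)) * (\<Prod>l\<in>{n..<p}. rGamma (as ! l - b1)) * z powr b1 *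
      (\<Sum>k. (\<Prod>l<p. pochhammer (1 + b1 - as ! l) k) * (\<Prod>l\<in>{1..<q}. rGamma (1 + b1 - bs ! l + real k))
            * (((-1) powi (int p - 1 - int n)) * z) ^ k / fact k))"

end

theory Submission
  imports Defs
begin

lemma exp_series_k:
  fixes x :: real
  shows "(\<lambda>k. real k * x ^ k / fact k) sums (x * exp x)"
proof -
  have "(\<lambda>n. x ^ n / fact n) sums exp x"
    using exp_converges[of x] by (simp add: divide_inverse mult.commute)
  then have "(\<lambda>n. x * (x ^ n / fact n)) sums (x * exp x)" by (rule sums_mult)
  moreover have "(\<lambda>n. real (Suc n) * x ^ Suc n / fact (Suc n)) = (\<lambda>n. x * (x ^ n / fact n))"
  proof (rule ext)
    fix n
    have nz: "real (Suc n) \<noteq> 0" by simp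
    have "real (Suc n) * x ^ Suc n / fact (Suc n) = real (Suc n) * (x * x ^ n) / (real (Suc n) * fact n)"
      by (simp only: fact_Suc power_Suc)
    also have "\<dots> = x * (x ^ n / fact n)" using nz by simp
    finally show "real (Suc n) * x ^ Suc n / fact (Suc n) = x * (x ^ n / fact n)" .
  qed
  ultimately have "(\<lambda>n. real (Suc n) * x ^ Suc n / fact (Suc n)) sums (x * exp x)" by simp
  then show ?thesis using sums_Suc_iff[of "\<lambda>k. real k * x ^ k / fact k" "x * exp x"] by simp
qed

lemma exp_series_lin:
  fixes x a :: real
  shows "(\<lambda>k. (a + real k) * x ^ k / fact k) sums ((a + x) * exp x)"
proof -
  have "(\<lambda>n. x ^ n / fact n) sums exp x"
    using exp_converges[of x] by (simp add: divide_inverse mult.commute)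
  then have "(\<lambda>n. a * (x ^ n / fact n)) sums (a * exp x)" by (rule sums_mult)
  from sums_add[OF this exp_series_k[of x]]
  show ?thesis by (simp add: field_simps)
qed

lemma mg: "meijerG_1 n [a0,a1] [b0,b1,b2] z = (\<Prod>l<n. Gamma(1+b0-[a0,a1]!l)) * (\<Prod>l\<in>{n..<2}. rGamma([a0,a1]!l - b0)) * z powr b0 * (\<Sum>k. (\<Prod>l<2. pochhammer (1+b0-[a0,a1]!l) k) * (\<Prod>l\<in>{1..<3}. rGamma(1+b0-[b0,b1,b2]!l + real k)) * (((-1) powi (int 2 - 1 - int n)) * z)^k / fact k)"
proof -
  have l2: "length [a0,a1] = 2" and l3: "length [b0,b1,b2] = 3" by simp_all
  show ?thesis unfolding meijerG_1_def Let_def l2 l3 nth_Cons_0 ..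
qed

lemma meijer_eval:
  fixes md z :: real
  assumes "md > 0" "z > 0"
  shows "meijerG_1 2 [0, 1] [md, 0, 2] z = z powr md * exp (- z) * (md - 1 - z)"
proof -
  define C where "C = Gamma (1 + md) * Gamma md"
  have "Gamma (1 + md) > 0" "Gamma md > 0" using assms by (simp_all add: Gamma_real_pos)
  then have C0: "C \<noteq> 0" by (simp add: C_def)
  define T where "T = (\<lambda>k. (\<Prod>l<2. pochhammer (1 + md - [0,1::real] ! l) k) *
      (\<Prod>l\<in>{1..<3}. rGamma (1 + md - [md,0,2::real] ! l + real k)) *
      (((-1) powi (int 2 - 1 - int 2)) * z) ^ k / fact k)"
  have Tk: "C * T k = (md - 1 + real k) * (- z) ^ k / fact k" for k
  proof -
    have e1: "Gamma (1 + md) * pochhammer (1 + md) k * rGamma (1 + md + real k) = 1"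
    proof -
      have r1: "rGamma (1 + md) = pochhammer (1 + md) k * rGamma (1 + md + real k)"
        by (rule pochhammer_rGamma)
      have g1: "Gamma (1 + md) * rGamma (1 + md) = 1"
        proof -
        have "Gamma (1 + md) > 0" using assms by (simp add: Gamma_real_pos)
        then show ?thesis by (simp add: rGamma_inverse_Gamma)
      qed
      show ?thesis using r1 g1 by (simp add: mult.assoc)
    qed
    have e2: "Gamma md * pochhammer md k * rGamma (md - 1 + real k) = md - 1 + real k"
    proof -
      have "rGamma (md - 1 + real k) = (md - 1 + real k) * rGamma (md + real k)"
        using rGamma_plus1[of "md - 1 + real k"] by simp
      moreover have "Gamma md * pochhammer md k * rGamma (md + real k) = 1"
      proof -
        have r1: "rGamma md = pochhammer md k * rGamma (md + real k)"
          by (rule pochhammer_rGamma)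
        have g1: "Gamma md * rGamma md = 1"
          proof -
          have "Gamma md > 0" using assms by (simp add: Gamma_real_pos)
          then show ?thesis by (simp add: rGamma_inverse_Gamma)
        qed
        show ?thesis using r1 g1 by (simp add: mult.assoc)
      qed
      ultimately show ?thesis by (metis mult.commute mult.left_commute mult_1_right)
    qed
    have i13: "{1..<3::nat} = {1, 2}" by auto
    have pr: "(\<Prod>l\<in>{1..<3}. rGamma (1 + md - [md,0,2::real] ! l + real k)) =
       rGamma (1 + md + real k) * rGamma (md - 1 + real k)"
      unfolding i13 by (simp add: algebra_simps)
    have pl: "(\<Prod>l<2. pochhammer (1 + md - [0,1::real] ! l) k) = pochhammer (1 + md) k * pochhammer md k"
      by (simp add: lessThan_nat_numeral)
    have pw: "(-1::real) powi (int 2 - 1 - int 2) = -1" by simp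
    have "C * T k = (Gamma (1 + md) * pochhammer (1 + md) k * rGamma (1 + md + real k)) *
        (Gamma md * pochhammer md k * rGamma (md - 1 + real k)) * (- z) ^ k / fact k"
      unfolding T_def C_def pw pr pl
      by (simp add: algebra_simps)
    then show ?thesis using e1 e2 by simp
  qed
  have "(\<lambda>k. C * T k) sums ((md - 1 + - z) * exp (- z))"
    unfolding Tk using exp_series_lin[of "md - 1" "-z"] by simp
  then have "(\<lambda>k. C * T k / C) sums ((md - 1 + - z) * exp (- z) / C)"
    by (rule sums_divide)
  then have "T sums ((md - 1 - z) * exp (- z) / C)" using C0 by simp
  then have S: "suminf T = (md - 1 - z) * exp (- z) / C" by (rule sums_unique[symmetric])
  have "meijerG_1 2 [0, 1] [md, 0, 2] z = C * 1 * z powr md * suminf T"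
    unfolding mg T_def C_def by (simp add: lessThan_nat_numeral)
  then show ?thesis using S C0 by simp
qed

lemma lig_integrable:
  fixes m b :: real
  assumes "m > 0"
  shows "(\<lambda>t. t powr (m - 1) * exp (- t)) integrable_on {0..b}"
proof -
  have "((\<lambda>t. t powr (m - 1) / exp t) has_integral Gamma m) {0..}"
    using Gamma_integral_real[OF assms] .
  moreover have "(\<lambda>t. t powr (m - 1) / exp t) = (\<lambda>t. t powr (m - 1) * exp (- t))"
    by (simp add: exp_minus divide_inverse)
  ultimately have "(\<lambda>t. t powr (m - 1) * exp (- t)) integrable_on {0..}"
    by (metis integrable_on_def)
  then have "(\<lambda>t. t powr (m - 1) * exp (- t)) absolutely_integrable_on {0..}"
    by (rule nonnegative_absolutely_integrable_1) simp
  then have "(\<lambda>t. t powr (m - 1) * exp (- t)) absolutely_integrable_on {0..b}"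
    by (rule set_integrable_subset) auto
  then show ?thesis using absolutely_integrable_on_def by blast
qed

lemma lig_deriv:
  fixes m u :: real
  assumes "m > 0" "u > 0"
  shows "((\<lambda>x. lower_inc_Gamma m x) has_real_derivative (u powr (m - 1) * exp (- u))) (at u)"
proof -
  let ?h = "\<lambda>t. t powr (m - 1) * exp (- t)"
  have int: "?h integrable_on {0..u+1}" by (rule lig_integrable[OF assms(1)])
  have cont: "continuous (at u within ({0..u+1} - {})) ?h"
  proof -
    have "isCont ?h u" using assms(2) by (intro continuous_intros) auto
    then show ?thesis by (rule continuous_at_imp_continuous_at_within)
  qed
  have x0: "u \<in> {0..u+1} - {}" using assms by auto
  have intr: "u \<in> interior ({0..u+1} - {})" using assms by auto
  have d: "((\<lambda>x. integral {0..x} ?h) has_vector_derivative ?h u) (at u within ({0..u+1} - {}))"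
    by (rule integral_has_vector_derivative_continuous_at[OF int x0 finite.emptyI cont])
  have "((\<lambda>x. integral {0..x} ?h) has_vector_derivative ?h u) (at u)"
    using d unfolding at_within_interior[OF intr] .
  then show ?thesis
    unfolding lower_inc_Gamma_def has_real_derivative_iff_has_vector_derivative .
qed

lemma hi_bochner_lebesgue:
  fixes f :: "real \<Rightarrow> real"
  assumes I: "(f has_integral I) UNIV" and nn: "\<And>x. 0 \<le> f x"
  shows "has_bochner_integral lebesgue f I"
proof -
  have "f absolutely_integrable_on UNIV"
    using I nn by (intro nonnegative_absolutely_integrable_1) (auto simp: integrable_on_def)
  then have int: "integrable lebesgue f" by (simp add: set_integrable_def)
  have "integral UNIV f = integral\<^sup>L lebesgue f" by (rule integral_lebesgue[OF int])
  moreover have "integral UNIV f = I" using I by (rule integral_unique)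
  ultimately show ?thesis using int by (simp add: has_bochner_integral_iff)
qed

lemma lebesgue_to_lborel:
  fixes f :: "real \<Rightarrow> real"
  assumes "has_bochner_integral lebesgue f v" "f \<in> borel_measurable borel"
  shows "has_bochner_integral lborel f v"
proof -
  have m: "f \<in> borel_measurable lborel" using assms(2) by simp
  show ?thesis using assms(1) integrable_completion[OF m] integral_completion[OF m]
    by (simp add: has_bochner_integral_iff)
qed

definition Fg :: "real \<Rightarrow> real \<Rightarrow> real" where
  "Fg s t = (if t \<in> {0..} then t powr (s - 1) / exp t else 0)"

lemma Fg_lebesgue:
  assumes "s > 0"
  shows "has_bochner_integral lebesgue (Fg s) (Gamma s)"
proof (rule hi_bochner_lebesgue)
  show "(Fg s has_integral Gamma s) UNIV"
    unfolding Fg_def has_integral_restrict_UNIV by (rule Gamma_integral_real[OF assms])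
  show "0 \<le> Fg s x" for x by (simp add: Fg_def)
qed

lemma gamma_moment_lebesgue:
  fixes m g :: real and j :: nat
  assumes m: "m > 0" and g: "g > 0"
  shows "has_bochner_integral lebesgue (\<lambda>x. gamma_density m g x * x ^ j)
           (Gamma (m + j) / Gamma m * (g / m) ^ j)"
proof -
  define c where "c = m / g"
  have c: "c > 0" using m g by (simp add: c_def)
  define K where "K = c powr (1 - real j) / Gamma m"
  have "has_bochner_integral lebesgue (\<lambda>x. Fg (m + j) (0 + c * x)) (Gamma (m + j) /\<^sub>R \<bar>c\<bar>)"
    using has_bochner_integral_lebesgue_real_affine_iff[of c "Fg (m + j)" "Gamma (m + j)" 0] c
      Fg_lebesgue[of "m + j"] m by simp
  then have "has_bochner_integral lebesgue (\<lambda>x. K * Fg (m + j) (c * x)) (K * (Gamma (m + j) / c))"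
    using c by (intro has_bochner_integral_mult_right) (simp add: divide_inverse mult.commute)
  moreover have "K * Fg (m + j) (c * x) = gamma_density m g x * x ^ j" for x
  proof (cases "x > 0")
    case True
    have cx: "c * x > 0" using c True by simp
    have A: "(c * x) powr (m + real j - 1) = c powr (m + real j - 1) * (x powr (m - 1) * x ^ j)"
      using c True by (simp add: powr_mult powr_add[symmetric] powr_realpow[symmetric] algebra_simps)
    have B: "c powr (1 - real j) * c powr (m + real j - 1) = c powr m"
      by (simp add: powr_add[symmetric])
    have e: "exp (- m * x / g) = 1 / exp (c * x)"
      by (simp add: c_def exp_minus divide_inverse)
    have "K * Fg (m + j) (c * x) = c powr (1 - real j) * ((c * x) powr (m + real j - 1) / exp (c * x)) / Gamma m"
      using cx by (simp add: K_def Fg_def)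
    also have "\<dots> = (c powr (1 - real j) * c powr (m + real j - 1)) * (x powr (m - 1) * x ^ j) / exp (c * x) / Gamma m"
      unfolding A by (simp only: mult.assoc times_divide_eq_right)
    also have "\<dots> = c powr m * x powr (m - 1) * (1 / exp (c * x)) / Gamma m * x ^ j"
      unfolding B by simp
    also have "\<dots> = gamma_density m g x * x ^ j"
      unfolding gamma_density_def e c_def[symmetric] using True by simp
    finally show ?thesis .
  next
    case False
    have "Fg (m + j) (c * x) = 0"
    proof (cases "x = 0")
      case True
      then show ?thesis by (simp add: Fg_def)
    next
      case False
      with \<open>\<not> x > 0\<close> have "c * x < 0" using c by (simp add: mult_pos_neg)
      then show ?thesis by (simp add: Fg_def)
    qed
    then show ?thesis using False by (simp add: gamma_density_def)
  qed
  moreover have "K * (Gamma (m + j) / c) = Gamma (m + j) / Gamma m * (g / m) ^ j"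
  proof -
    have "c powr (1 - real j) = c / c ^ j"
      using c by (simp add: powr_diff powr_realpow)
    then have "c powr (1 - real j) / c = 1 / c ^ j" using c by simp
    also have "\<dots> = (g / m) ^ j" using m g by (simp add: c_def power_divide)
    finally have cc: "c powr (1 - real j) / c = (g / m) ^ j" .
    have "K * (Gamma (m + j) / c) = Gamma (m + j) / Gamma m * (c powr (1 - real j) / c)"
      by (simp add: K_def)
    then show ?thesis unfolding cc .
  qed
  ultimately show ?thesis by simp
qed

lemma gd_nonneg: "m > 0 \<Longrightarrow> g > 0 \<Longrightarrow> 0 \<le> gamma_density m g x"
  by (simp add: gamma_density_def)

lemma gamma_variance:
  fixes M :: "'s measure" and X :: "'s \<Rightarrow> real"
  assumes P: "prob_space M" and m: "m > 0" and g: "g > 0"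
    and D: "distributed M lborel X (\<lambda>x. ennreal (gamma_density m g x))"
  shows "prob_space.variance M X = g\<^sup>2 / m"
proof -
  interpret prob_space M by (rule P)
  have nn: "\<And>x. 0 \<le> gamma_density m g x" using m g by (rule gd_nonneg)
  have meas: "gamma_density m g \<in> borel_measurable lborel"
    using distributed_real_measurable[of lborel "gamma_density m g" M X] nn D by simp
  then have meas': "gamma_density m g \<in> borel_measurable borel" by simp
  have hj: "has_bochner_integral lborel (\<lambda>x. gamma_density m g x * x ^ j)
           (Gamma (m + j) / Gamma m * (g / m) ^ j)" for j :: nat
    by (rule lebesgue_to_lborel[OF gamma_moment_lebesgue[OF m g]]) (use meas' in measurable)
  have G1: "Gamma (m + 1) = m * Gamma m"
    using m by (intro Gamma_plus1) (auto elim!: nonpos_Ints_cases)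
  have G2: "Gamma (m + 2) = (m + 1) * Gamma (m + 1)"
  proof -
    have "m + 1 \<notin> \<int>\<^sub>\<le>\<^sub>0" using m by (auto elim!: nonpos_Ints_cases)
    from Gamma_plus1[OF this] have "Gamma (m + 1 + 1) = (m + 1) * Gamma (m + 1)" .
    moreover have "m + 1 + 1 = m + 2" by simp
    ultimately show ?thesis by simp
  qed
  have Gp: "Gamma m > 0" using m by (simp add: Gamma_real_pos)
  then have Gn: "Gamma m \<noteq> 0" by simp
  have E: "expectation X = g"
  proof -
    have "expectation X = (\<integral>x. gamma_density m g x * x \<partial>lborel)"
      using distributed_integral[OF D, of "\<lambda>x. x"] nn by simp
    also have "\<dots> = Gamma (m + 1) / Gamma m * (g / m)"
      using has_bochner_integral_integral_eq[OF hj[of 1]] by simp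
    also have "\<dots> = g" using G1 Gp m by (auto simp: Gamma_eq_zero_iff elim!: nonpos_Ints_cases)
    finally show ?thesis .
  qed
  have "variance X = (\<integral>x. gamma_density m g x * (x - g)\<^sup>2 \<partial>lborel)"
    using distributed_integral[OF D, of "\<lambda>x. (x - g)\<^sup>2"] nn E by simp
  also have "\<dots> = g\<^sup>2 / m"
  proof -
    have "has_bochner_integral lborel
       (\<lambda>x. gamma_density m g x * x ^ 2 - 2 * g * (gamma_density m g x * x ^ 1) + g\<^sup>2 * (gamma_density m g x * x ^ 0))
       (Gamma (m + 2) / Gamma m * (g / m) ^ 2 - 2 * g * (Gamma (m + 1) / Gamma m * (g / m) ^ 1)
          + g\<^sup>2 * (Gamma (m + 0) / Gamma m * (g / m) ^ 0))"
      using hj[of 2] hj[of 1] hj[of 0]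
      by (intro has_bochner_integral_add has_bochner_integral_diff has_bochner_integral_mult_right) simp_all
    moreover have "(\<lambda>x. gamma_density m g x * x ^ 2 - 2 * g * (gamma_density m g x * x ^ 1) + g\<^sup>2 * (gamma_density m g x * x ^ 0))
        = (\<lambda>x. gamma_density m g x * (x - g)\<^sup>2)"
      by (rule ext) (simp add: power2_eq_square algebra_simps)
    moreover have "Gamma (m + 2) / Gamma m * (g / m) ^ 2 - 2 * g * (Gamma (m + 1) / Gamma m * (g / m) ^ 1)
          + g\<^sup>2 * (Gamma (m + 0) / Gamma m * (g / m) ^ 0) = g\<^sup>2 / m"
      using G1 G2 Gn m by (simp add: field_simps power2_eq_square)
    ultimately show ?thesis using has_bochner_integral_integral_eq by metis
  qed
  finally show ?thesis .
qed

lemma q_deriv: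
  fixes m u :: real
  assumes "u > 0"
  shows "((\<lambda>u. u powr (m - 1) * exp (- u)) has_real_derivative
          ((m - 1) * u powr (m - 2) * exp (- u) - u powr (m - 1) * exp (- u))) (at u)"
proof -
  have e: "((\<lambda>u. exp (- u)) has_real_derivative - exp (- u)) (at u)"
    by (auto intro!: derivative_eq_intros)
  have "((\<lambda>u. u powr (m - 1) * exp (- u)) has_real_derivative
     (m - 1) * u powr (m - 1 - 1) * exp (- u) + - exp (- u) * u powr (m - 1)) (at u)"
    by (rule DERIV_mult[OF has_real_derivative_powr[OF assms] e])
  then show ?thesis by (rule DERIV_cong) (simp add: algebra_simps)
qed

theorem corollary3p2:
  fixes M :: "'s measure" and Xd Xe :: "'s \<Rightarrow> real"
    and Rs md me gd ge sigma2 lambda :: real and P :: "real \<Rightarrow> real"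
  assumes "prob_space M"
    and "Rs > 0" and "lambda = 2 powr Rs"
    and "md > 0" and "me > 0" and "gd > 0" and "ge > 0"
    and "distributed M lborel Xd (\<lambda>x. ennreal (gamma_density md gd x))"
    and "distributed M lborel Xe (\<lambda>x. ennreal (gamma_density me ge x))"
    and "prob_space.indep_var M borel Xd borel Xe"
    and "sigma2 = prob_space.variance M Xe"
    and "P = (\<lambda>x. gamma_cdf md gd (lambda - 1 + lambda * x))"
  shows "P ge + sigma2 / 2 * deriv (deriv P) ge =
           lower_inc_Gamma md (md * (lambda - 1 + lambda * ge) / gd) / Gamma md
           + ge\<^sup>2 * lambda\<^sup>2 *
             (((me + 1) / me - 1) *
               meijerG_1 2 [0, 1] [md, 0, 2] (md * (lambda - 1 + lambda * ge) / gd))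
             / (2 * Gamma md * (lambda - 1 + lambda * ge)\<^sup>2)"
proof -
  note md = \<open>md > 0\<close> and me = \<open>me > 0\<close> and gd = \<open>gd > 0\<close> and ge = \<open>ge > 0\<close>
  define L where "L = lambda"
  have L1: "L > 1" unfolding L_def \<open>lambda = 2 powr Rs\<close> using \<open>Rs > 0\<close>
    by (simp add: gr_one_powr)
  define u where "u = (\<lambda>x. md * (L - 1 + L * x) / gd)"
  define q where "q = (\<lambda>u. u powr (md - 1) * exp (- u))"
  define P1 where "P1 = (\<lambda>x. q (u x) * (md * L / gd) / Gamma md)"
  have Pdef: "P = (\<lambda>x. lower_inc_Gamma md (u x) / Gamma md)"
    unfolding \<open>P = _\<close> gamma_cdf_def u_def L_def ..
  have ud: "(u has_real_derivative (md * L / gd)) (at x)" for x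
    unfolding u_def using gd by (auto intro!: derivative_eq_intros simp: field_simps)
  have hP: "(P has_real_derivative P1 x) (at x)" if "L - 1 + L * x > 0" for x
  proof -
    have "u x > 0" using that md gd by (simp add: u_def)
    from DERIV_chain2[OF lig_deriv[OF md this] ud]
    have "((\<lambda>x. lower_inc_Gamma md (u x)) has_real_derivative q (u x) * (md * L / gd)) (at x)"
      by (simp add: q_def)
    from DERIV_cdivide[OF this, of "Gamma md"] show ?thesis
      unfolding Pdef P1_def by simp
  qed
  define y0 where "y0 = L - 1 + L * ge"
  have y0: "y0 > 0" using L1 ge by (simp add: y0_def add_pos_pos)
  define U where "U = u ge"
  have U: "U > 0" using y0 md gd by (simp add: U_def u_def y0_def[symmetric])
  define q' where "q' = (md - 1) * U powr (md - 2) * exp (- U) - U powr (md - 1) * exp (- U)"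
  have hP1: "(P1 has_real_derivative q' * (md * L / gd) * (md * L / gd) / Gamma md) (at ge)"
  proof -
    have Ug: "u ge > 0" using U by (simp add: U_def)
    from DERIV_chain2[OF q_deriv[OF Ug, of md] ud[of ge]]
    have "((\<lambda>x. q (u x)) has_real_derivative q' * (md * L / gd)) (at ge)"
      by (simp add: q_def q'_def U_def)
    from DERIV_cdivide[OF DERIV_cmult_right[OF this, of "md * L / gd"], of "Gamma md"]
    show ?thesis unfolding P1_def by simp
  qed
  have op: "open {x::real. 0 < L - 1 + L * x}"
    by (rule open_Collect_less) (auto intro!: continuous_intros)
  have ev: "eventually (\<lambda>x. 0 < L - 1 + L * x) (nhds ge)"
    using eventually_nhds_in_open[OF op] y0 by (simp add: y0_def)
  have ev2: "eventually (\<lambda>x. deriv P x = P1 x) (nhds ge)"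
    using ev by eventually_elim (rule DERIV_imp_deriv[OF hP])
  have dd: "deriv (deriv P) ge = q' * (md * L / gd) * (md * L / gd) / Gamma md"
    using deriv_cong_ev[OF ev2 refl] DERIV_imp_deriv[OF hP1] by simp
  have var: "sigma2 = ge\<^sup>2 / me"
    using gamma_variance[OF \<open>prob_space M\<close> me ge \<open>distributed M lborel Xe _\<close>] \<open>sigma2 = _\<close> by simp
  have mg: "meijerG_1 2 [0, 1] [md, 0, 2] U = U powr md * exp (- U) * (md - 1 - U)"
    by (rule meijer_eval[OF md U])
  have Ueq: "md * (lambda - 1 + lambda * ge) / gd = U" by (simp add: U_def u_def L_def)
  have PU: "P ge = lower_inc_Gamma md U / Gamma md" by (simp add: Pdef U_def)
  have Uy: "U = md * y0 / gd" by (simp add: U_def u_def y0_def)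
  have mdL: "md * L / gd = L * U / y0" unfolding Uy using y0 by simp
  have p2: "U powr (md - 2) = U powr md / U\<^sup>2" using U by (simp add: powr_diff powr_numeral)
  have p1: "U powr (md - 1) = U powr md / U" using U by (simp add: powr_diff)
  have Gp: "Gamma md \<noteq> 0" using md by (auto simp: Gamma_eq_zero_iff elim!: nonpos_Ints_cases)
  show ?thesis
    unfolding Ueq dd var PU mg mdL q'_def p2 p1 L_def[symmetric] y0_def[symmetric]
    using U y0 me Gp by (simp add: field_simps power2_eq_square Uy[symmetric] mg)
qed
end
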